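(* Let $C=C(m,n;k,l;c,d)$ be a $C$-shaped supergrid graph with $a=m-k=1$, and let $s,t$ be two distinct vertices of $C$ (labeled so that $s_x\leq t_x$) such that $(C,s,t)$ satisfies none of the conditions: (F1) $s$ or $t$ is a cut vertex of $C$, or $\{s,t\}$ is a vertex cut of $C$; (F3) there is a vertex $w\in V(C)$ with $\deg(w)=1$, $w\neq s$, $w\neq t$; (F9) $a=1$, and ($s_y,t_y\leq c$ or $s_y,t_y>c+l$). Then $C$ contains a Hamiltonian path from $s$ to $t$.
   Context: The supergrid graph $S^\infty$ has vertex set $\mathbb{Z}^2$, two distinct vertices $u,v$ being adjacent iff $|u_x-v_x|\leq 1$ and $|u_y-v_y|\leq 1$; a supergrid graph is a finite vertex-induced subgraph of $S^\infty$. For integers $m\geq 2$, $n\geq 3$, $k,l,c\geq 1$ with $d=n-l-c\geq 1$ and $a=m-k\geq 1$, $C(m,n;k,l;c,d)$ is the supergrid graph induced by $\{(x,y):1\leq x\leq m,\ 1\leq y\leq n\}\setminus\{(x,y): a+1\leq x\leq m,\ c+1\leq y\leq c+l\}$. A cut vertex $v$: $C-v$ disconnected; a vertex cut $V_1$: $C-V_1$ disconnected. A Hamiltonian path from $s$ to $t$ is a simple path from $s$ to $t$ visiting every vertex exactly once. *)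

theory Defs
  imports Main
begin

type_synonym vtx = "int \<times> int"

definition sg_adj :: "vtx \<Rightarrow> vtx \<Rightarrow> bool" where
  "sg_adj u v \<longleftrightarrow> u \<noteq> v \<and> \<bar>fst u - fst v\<bar> \<le> 1 \<and> \<bar>snd u - snd v\<bar> \<le> 1"

text \<open>Vertex set of C(m,n;k,l;c,d), with d = n - l - c.\<close>
definition C_shape :: "int \<Rightarrow> int \<Rightarrow> int \<Rightarrow> int \<Rightarrow> int \<Rightarrow> vtx set" where
  "C_shape m n k l c =
     {(x, y). 1 \<le> x \<and> x \<le> m \<and> 1 \<le> y \<and> y \<le> n}
     - {(x, y). m - k + 1 \<le> x \<and> x \<le> m \<and> c + 1 \<le> y \<and> y \<le> c + l}"

definition is_path_in :: "vtx set \<Rightarrow> vtx list \<Rightarrow> bool" where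
  "is_path_in V p \<longleftrightarrow> p \<noteq> [] \<and> set p \<subseteq> V \<and>
     (\<forall>i. Suc i < length p \<longrightarrow> sg_adj (p ! i) (p ! Suc i))"

definition sg_connected :: "vtx set \<Rightarrow> bool" where
  "sg_connected V \<longleftrightarrow> (\<forall>u\<in>V. \<forall>v\<in>V. \<exists>p. is_path_in V p \<and> hd p = u \<and> last p = v)"

definition is_cut_vertex :: "vtx set \<Rightarrow> vtx \<Rightarrow> bool" where
  "is_cut_vertex V v \<longleftrightarrow> v \<in> V \<and> \<not> sg_connected (V - {v})"

definition is_vertex_cut :: "vtx set \<Rightarrow> vtx set \<Rightarrow> bool" where
  "is_vertex_cut V W \<longleftrightarrow> W \<subseteq> V \<and> \<not> sg_connected (V - W)"

definition sg_degree :: "vtx set \<Rightarrow> vtx \<Rightarrow> nat" where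
  "sg_degree V w = card {u \<in> V. sg_adj w u}"

definition is_ham_path :: "vtx set \<Rightarrow> vtx \<Rightarrow> vtx \<Rightarrow> vtx list \<Rightarrow> bool" where
  "is_ham_path V s t p \<longleftrightarrow> is_path_in V p \<and> distinct p \<and> set p = V \<and> hd p = s \<and> last p = t"

end

theory Submission
  imports Defs
begin

definition hp :: "vtx set \<Rightarrow> vtx \<Rightarrow> vtx \<Rightarrow> bool" where
  "hp V s t \<longleftrightarrow> (\<exists>p. is_ham_path V s t p)"

definition rect :: "int \<Rightarrow> int \<Rightarrow> int \<Rightarrow> int \<Rightarrow> vtx set" where
  "rect x1 x2 y1 y2 = {(x,y). x1 \<le> x \<and> x \<le> x2 \<and> y1 \<le> y \<and> y \<le> y2}"

lemma mem_rect[simp]: "(p \<in> rect x1 x2 y1 y2) \<longleftrightarrow> x1 \<le> fst p \<and> fst p \<le> x2 \<and> y1 \<le> snd p \<and> snd p \<le> y2"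
  by (cases p) (auto simp: rect_def)

lemma sg_adj_sym: "sg_adj u v = sg_adj v u"
  unfolding sg_adj_def by auto

lemma hp_single: "hp {v} v v"
  unfolding hp_def is_ham_path_def is_path_in_def
  by (rule exI[of _ "[v]"]) auto

lemma hp_concat:
  assumes "hp A s e" "hp B f t" "A \<inter> B = {}" "sg_adj e f"
  shows "hp (A \<union> B) s t"
proof -
  obtain p where p: "is_ham_path A s e p" using assms(1) hp_def by auto
  obtain q where q: "is_ham_path B f t q" using assms(2) hp_def by auto
  have pn: "p \<noteq> []" and qn: "q \<noteq> []" using p q by (auto simp: is_ham_path_def is_path_in_def)
  have adj: "sg_adj ((p@q) ! i) ((p@q) ! Suc i)" if "Suc i < length (p@q)" for i
  proof -
    consider "Suc i < length p" | "Suc i = length p" | "i \<ge> length p" by linarith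
    then show ?thesis
    proof cases
      case 1 then show ?thesis using p by (auto simp: nth_append is_ham_path_def is_path_in_def)
    next
      case 2
      then have i: "i = length p - 1" by simp
      then have "(p@q) ! i = last p" using pn by (simp add: nth_append last_conv_nth)
      moreover have "(p@q) ! Suc i = hd q" using 2 qn by (simp add: nth_append hd_conv_nth)
      ultimately show ?thesis using p q assms(4) by (auto simp: is_ham_path_def)
    next
      case 3
      then have "Suc (i - length p) < length q" using that by auto
      then have "sg_adj (q ! (i - length p)) (q ! Suc (i - length p))"
        using q by (auto simp: is_ham_path_def is_path_in_def)
      moreover have "Suc i - length p = Suc (i - length p)" using 3 by auto
      ultimately show ?thesis using 3 by (simp add: nth_append)
    qed
  qed
  have "is_ham_path (A \<union> B) s t (p@q)"
    using p q pn qn adj assms(3) unfolding is_ham_path_def is_path_in_def by auto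
  then show ?thesis unfolding hp_def by blast
qed

lemma hp_rev:
  assumes "hp V s t" shows "hp V t s"
proof -
  obtain p where p: "is_ham_path V s t p" using assms hp_def by auto
  have pn: "p \<noteq> []" using p by (auto simp: is_ham_path_def is_path_in_def)
  have adj: "sg_adj (rev p ! i) (rev p ! Suc i)" if "Suc i < length (rev p)" for i
  proof -
    let ?j = "length p - Suc (Suc i)"
    have j: "Suc ?j < length p" using that by auto
    have "sg_adj (p ! ?j) (p ! Suc ?j)" using p j by (auto simp: is_ham_path_def is_path_in_def)
    moreover have "rev p ! i = p ! Suc ?j" using that by (simp add: rev_nth Suc_diff_Suc)
    moreover have "rev p ! Suc i = p ! ?j" using that by (simp add: rev_nth)
    ultimately show ?thesis by (simp add: sg_adj_sym)
  qed
  have "is_ham_path V t s (rev p)"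
    using p pn adj unfolding is_ham_path_def is_path_in_def by (auto simp: hd_rev last_rev)
  then show ?thesis unfolding hp_def by blast
qed

lemma hp_map:
  assumes "hp V s t" "\<And>u v. sg_adj u v \<Longrightarrow> sg_adj (f u) (f v)" "inj f"
  shows "hp (f ` V) (f s) (f t)"
proof -
  obtain p where p: "is_ham_path V s t p" using assms hp_def by auto
  have pn: "p \<noteq> []" using p by (auto simp: is_ham_path_def is_path_in_def)
  have "is_ham_path (f ` V) (f s) (f t) (map f p)"
    using p pn assms(2,3) unfolding is_ham_path_def is_path_in_def
    by (auto simp: hd_map last_map distinct_map inj_on_def)
  then show ?thesis unfolding hp_def by blast
qed

lemma hp_col: "y1 \<le> y2 \<Longrightarrow> hp (rect x x y1 y2) (x,y1) (x,y2)"
proof (induction "nat (y2 - y1)" arbitrary: y2)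
  case 0
  then have "rect x x y1 y2 = {(x,y1)}" by (auto simp: rect_def)
  then show ?case using 0 hp_single by auto
next
  case (Suc k)
  have IH: "hp (rect x x y1 (y2-1)) (x,y1) (x,y2-1)" using Suc by auto
  have "rect x x y1 y2 = rect x x y1 (y2-1) \<union> {(x,y2)}" using Suc.hyps(2) by (auto simp: rect_def)
  moreover have "hp (rect x x y1 (y2-1) \<union> {(x,y2)}) (x,y1) (x,y2)"
    by (rule hp_concat[OF IH hp_single]) (auto simp: sg_adj_def)
  ultimately show ?case by simp
qed

lemma hp_row: "x1 \<le> x2 \<Longrightarrow> hp (rect x1 x2 y y) (x1,y) (x2,y)"
proof -
  assume a: "x1 \<le> x2"
  have "hp ((\<lambda>(a,b). (b,a)) ` rect y y x1 x2) ((\<lambda>(a,b). (b,a)) (y,x1)) ((\<lambda>(a,b). (b,a)) (y,x2))"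
    by (rule hp_map[OF hp_col[OF a]]) (auto simp: sg_adj_def inj_def)
  moreover have "(\<lambda>(a,b). (b,a)) ` rect y y x1 x2 = rect x1 x2 y y"
    by (auto simp: rect_def image_iff)
  ultimately show ?thesis by simp
qed


lemma rect_reflx:
  assumes "hp (rect x1 x2 y1 y2) s t"
  shows "hp (rect x1 x2 y1 y2) (x1+x2-fst s, snd s) (x1+x2-fst t, snd t)"
proof -
  let ?f = "\<lambda>(a::int,b::int). (x1+x2-a, b)"
  have "hp (?f ` rect x1 x2 y1 y2) (?f s) (?f t)"
    by (rule hp_map[OF assms]) (auto simp: sg_adj_def inj_def)
  moreover have "?f ` rect x1 x2 y1 y2 = rect x1 x2 y1 y2"
  proof (rule set_eqI, rule iffI)
    fix z assume "z \<in> ?f ` rect x1 x2 y1 y2" then show "z \<in> rect x1 x2 y1 y2" by auto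
  next
    fix z assume z: "z \<in> rect x1 x2 y1 y2"
    then have "?f (?f z) = z" by (cases z) auto
    moreover have "?f z \<in> rect x1 x2 y1 y2" using z by (cases z) auto
    ultimately show "z \<in> ?f ` rect x1 x2 y1 y2" by (metis image_eqI)
  qed
  ultimately show ?thesis by (cases s, cases t) auto
qed

lemma rect_refly:
  assumes "hp (rect x1 x2 y1 y2) s t"
  shows "hp (rect x1 x2 y1 y2) (fst s, y1+y2-snd s) (fst t, y1+y2-snd t)"
proof -
  let ?f = "\<lambda>(a::int,b::int). (a, y1+y2-b)"
  have "hp (?f ` rect x1 x2 y1 y2) (?f s) (?f t)"
    by (rule hp_map[OF assms]) (auto simp: sg_adj_def inj_def)
  moreover have "?f ` rect x1 x2 y1 y2 = rect x1 x2 y1 y2"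
  proof (rule set_eqI, rule iffI)
    fix z assume "z \<in> ?f ` rect x1 x2 y1 y2" then show "z \<in> rect x1 x2 y1 y2" by auto
  next
    fix z assume z: "z \<in> rect x1 x2 y1 y2"
    then have "?f (?f z) = z" by (cases z) auto
    moreover have "?f z \<in> rect x1 x2 y1 y2" using z by (cases z) auto
    ultimately show "z \<in> ?f ` rect x1 x2 y1 y2" by (metis image_eqI)
  qed
  ultimately show ?thesis by (cases s, cases t) auto
qed

lemma step_tl:
  assumes IH: "\<And>X1 X2 Y1 Y2 s t. (X2-X1)+(Y2-Y1) < (x2-x1)+(y2-y1) \<Longrightarrow> X1 < X2 \<Longrightarrow> Y1 < Y2
     \<Longrightarrow> s \<in> rect X1 X2 Y1 Y2 \<Longrightarrow> t \<in> {(X1,Y1),(X1,Y2),(X2,Y1),(X2,Y2)} \<Longrightarrow> s \<noteq> t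
     \<Longrightarrow> hp (rect X1 X2 Y1 Y2) s t"
    and lt: "x1 < x2" "y1 < y2" and sR: "s \<in> rect x1 x2 y1 y2" and st: "s \<noteq> (x1,y2)"
  shows "hp (rect x1 x2 y1 y2) s (x1,y2)"
proof -
  obtain a b where s: "s = (a,b)" by (cases s)
  have ab: "x1 \<le> a" "a \<le> x2" "y1 \<le> b" "b \<le> y2" using sR s by auto
  consider (A) "b \<le> y2 - 1" "y2 - y1 \<ge> 2" "s \<noteq> (x2,y2-1)"
    | (B) "a \<ge> x1 + 1" "x2 - x1 \<ge> 2" "s \<noteq> (x1+1,y1)"
    | (C1) "a = x1" "y2 = y1 + 1" "b = y1"
    | (C2) "x2 = x1 + 1" "a = x2"
    | (C3) "a = x1 + 1" "b = y1" "y2 = y1 + 1" "x2 \<ge> x1 + 2"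
    using ab st s lt by fastforce
  then show ?thesis
  proof cases
    case A
    have h1: "hp (rect x1 x2 y1 (y2-1)) s (x2,y2-1)"
      by (rule IH) (use A lt ab s in auto)
    have h2: "hp (rect x1 x2 y2 y2) (x2,y2) (x1,y2)" using hp_rev hp_row lt by simp
    have "hp (rect x1 x2 y1 (y2-1) \<union> rect x1 x2 y2 y2) s (x1,y2)"
      by (rule hp_concat[OF h1 h2]) (auto simp: sg_adj_def)
    moreover have "rect x1 x2 y1 (y2-1) \<union> rect x1 x2 y2 y2 = rect x1 x2 y1 y2" using lt by (auto simp: rect_def)
    ultimately show ?thesis by simp
  next
    case B
    have h1: "hp (rect (x1+1) x2 y1 y2) s (x1+1,y1)"
      by (rule IH) (use B lt ab s in auto)
    have h2: "hp (rect x1 x1 y1 y2) (x1,y1) (x1,y2)" using hp_col lt by simp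
    have "hp (rect (x1+1) x2 y1 y2 \<union> rect x1 x1 y1 y2) s (x1,y2)"
      by (rule hp_concat[OF h1 h2]) (auto simp: sg_adj_def)
    moreover have "rect (x1+1) x2 y1 y2 \<union> rect x1 x1 y1 y2 = rect x1 x2 y1 y2" using lt by (auto simp: rect_def)
    ultimately show ?thesis by simp
  next
    case C1
    have h1: "hp (rect x1 x2 y1 y1) s (x2,y1)" using hp_row lt s C1 by simp
    have h2: "hp (rect x1 x2 y2 y2) (x2,y2) (x1,y2)" using hp_rev hp_row lt by simp
    have "hp (rect x1 x2 y1 y1 \<union> rect x1 x2 y2 y2) s (x1,y2)"
      by (rule hp_concat[OF h1 h2]) (use C1 in \<open>auto simp: sg_adj_def\<close>)
    moreover have "rect x1 x2 y1 y1 \<union> rect x1 x2 y2 y2 = rect x1 x2 y1 y2" using C1 by (auto simp: rect_def)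
    ultimately show ?thesis by simp
  next
    case C2
    have l1: "hp (rect x2 x2 y1 b) s (x2,y1)" using hp_rev hp_col ab s C2 by simp
    have l2: "hp (rect x1 x1 y1 b) (x1,y1) (x1,b)" using hp_col ab by simp
    have L: "hp (rect x2 x2 y1 b \<union> rect x1 x1 y1 b) s (x1,b)"
      by (rule hp_concat[OF l1 l2]) (use C2 in \<open>auto simp: sg_adj_def\<close>)
    have LR: "rect x2 x2 y1 b \<union> rect x1 x1 y1 b = rect x1 x2 y1 b" using C2 by (auto simp: rect_def)
    consider "b = y2" | "b = y2 - 1" | "b \<le> y2 - 2" using ab by linarith
    then show ?thesis
    proof cases
      case 1 then show ?thesis using L LR s C2 by simp
    next
      case 2
      have u: "hp (rect x1 x2 y2 y2) (x2,y2) (x1,y2)" using hp_rev hp_row lt by simp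
      have "hp (rect x1 x2 y1 b \<union> rect x1 x2 y2 y2) s (x1,y2)"
        by (rule hp_concat[OF L[unfolded LR] u]) (use 2 C2 in \<open>auto simp: sg_adj_def\<close>)
      moreover have "rect x1 x2 y1 b \<union> rect x1 x2 y2 y2 = rect x1 x2 y1 y2" using 2 ab by (auto simp: rect_def)
      ultimately show ?thesis by simp
    next
      case 3
      have u: "hp (rect x1 x2 (b+1) y2) (x2,b+1) (x1,y2)"
        by (rule IH) (use 3 C2 ab lt in auto)
      have "hp (rect x1 x2 y1 b \<union> rect x1 x2 (b+1) y2) s (x1,y2)"
        by (rule hp_concat[OF L[unfolded LR] u]) (use 3 C2 in \<open>auto simp: sg_adj_def\<close>)
      moreover have "rect x1 x2 y1 b \<union> rect x1 x2 (b+1) y2 = rect x1 x2 y1 y2" using 3 ab by (auto simp: rect_def)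
      ultimately show ?thesis by simp
    qed
  next
    case C3
    have p45: "hp ({(x1,y1)} \<union> {(x1,y2)}) (x1,y1) (x1,y2)"
      by (rule hp_concat[OF hp_single hp_single]) (use C3 in \<open>auto simp: sg_adj_def\<close>)
    have p345: "hp ({(x1+1,y2)} \<union> ({(x1,y1)} \<union> {(x1,y2)})) (x1+1,y2) (x1,y2)"
      by (rule hp_concat[OF hp_single p45]) (use C3 in \<open>auto simp: sg_adj_def\<close>)
    have p2: "hp (rect (x1+2) x2 y1 y2) (x1+2,y1) (x1+2,y2)"
    proof (cases "x2 = x1 + 2")
      case True then show ?thesis using hp_col lt by simp
    next
      case False then show ?thesis by (intro IH) (use C3 lt in auto)
    qed
    have p2345: "hp (rect (x1+2) x2 y1 y2 \<union> ({(x1+1,y2)} \<union> ({(x1,y1)} \<union> {(x1,y2)}))) (x1+2,y1) (x1,y2)"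
      by (rule hp_concat[OF p2 p345]) (use C3 in \<open>auto simp: sg_adj_def\<close>)
    have all: "hp ({s} \<union> (rect (x1+2) x2 y1 y2 \<union> ({(x1+1,y2)} \<union> ({(x1,y1)} \<union> {(x1,y2)})))) s (x1,y2)"
      by (rule hp_concat[OF hp_single p2345]) (use C3 s in \<open>auto simp: sg_adj_def\<close>)
    moreover have "{s} \<union> (rect (x1+2) x2 y1 y2 \<union> ({(x1+1,y2)} \<union> ({(x1,y1)} \<union> {(x1,y2)}))) = rect x1 x2 y1 y2"
      using C3 s by (auto simp: rect_def)
    ultimately show ?thesis by simp
  qed
qed


lemma corner_aux:
  "\<forall>x1 x2 y1 y2 s t. nat ((x2-x1)+(y2-y1)) = N \<longrightarrow> x1 < x2 \<longrightarrow> y1 < y2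
     \<longrightarrow> s \<in> rect x1 x2 y1 y2 \<longrightarrow> t \<in> {(x1,y1),(x1,y2),(x2,y1),(x2,y2)} \<longrightarrow> s \<noteq> t
     \<longrightarrow> hp (rect x1 x2 y1 y2) s t"
proof (induction N rule: less_induct)
  case (less N)
  show ?case
  proof (intro allI impI)
    fix x1 x2 y1 y2 s t
    assume N: "nat ((x2-x1)+(y2-y1)) = N" and lt: "x1 < x2" "y1 < y2"
      and sR: "s \<in> rect x1 x2 y1 y2" and tc: "t \<in> {(x1,y1),(x1,y2),(x2,y1),(x2,y2)}" and st: "s \<noteq> t"
    have IH: "\<And>X1 X2 Y1 Y2 s t. (X2-X1)+(Y2-Y1) < (x2-x1)+(y2-y1) \<Longrightarrow> X1 < X2 \<Longrightarrow> Y1 < Y2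
     \<Longrightarrow> s \<in> rect X1 X2 Y1 Y2 \<Longrightarrow> t \<in> {(X1,Y1),(X1,Y2),(X2,Y1),(X2,Y2)} \<Longrightarrow> s \<noteq> t
     \<Longrightarrow> hp (rect X1 X2 Y1 Y2) s t"
    proof -
      fix X1 X2 Y1 Y2 s t
      assume "(X2-X1)+(Y2-Y1) < (x2-x1)+(y2-y1)" "X1 < X2" "Y1 < Y2"
        "s \<in> rect X1 X2 Y1 Y2" "t \<in> {(X1,Y1),(X1,Y2),(X2,Y1),(X2,Y2)}" "s \<noteq> t"
      moreover have "nat ((X2-X1)+(Y2-Y1)) < N" using N calculation(1-3) by auto
      ultimately show "hp (rect X1 X2 Y1 Y2) s t"
        using less.IH[of "nat ((X2-X1)+(Y2-Y1))"] by blast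
    qed
    have TL: "\<And>s. s \<in> rect x1 x2 y1 y2 \<Longrightarrow> s \<noteq> (x1,y2) \<Longrightarrow> hp (rect x1 x2 y1 y2) s (x1,y2)"
      by (rule step_tl[OF IH lt]) auto
    obtain a b where s: "s = (a,b)" by (cases s)
    have ab: "x1 \<le> a" "a \<le> x2" "y1 \<le> b" "b \<le> y2" using sR s by auto
    consider "t = (x1,y2)" | "t = (x2,y2)" | "t = (x1,y1)" | "t = (x2,y1)" using tc by auto
    then show "hp (rect x1 x2 y1 y2) s t"
    proof cases
      case 1 then show ?thesis using TL sR st by simp
    next
      case 2
      have "hp (rect x1 x2 y1 y2) (x1+x2-a, b) (x1,y2)" using TL ab st 2 s by auto
      from rect_reflx[OF this] show ?thesis using 2 s by simp
    next
      case 3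
      have "hp (rect x1 x2 y1 y2) (a, y1+y2-b) (x1,y2)" using TL ab st 3 s by auto
      from rect_refly[OF this] show ?thesis using 3 s by simp
    next
      case 4
      have "hp (rect x1 x2 y1 y2) (x1+x2-a, y1+y2-b) (x1,y2)" using TL ab st 4 s by auto
      from rect_refly[OF rect_reflx[OF this]] show ?thesis using 4 s by simp
    qed
  qed
qed

lemma corner:
  "x1 < x2 \<Longrightarrow> y1 < y2 \<Longrightarrow> s \<in> rect x1 x2 y1 y2 \<Longrightarrow> t \<in> {(x1,y1),(x1,y2),(x2,y1),(x2,y2)} \<Longrightarrow> s \<noteq> t
     \<Longrightarrow> hp (rect x1 x2 y1 y2) s t"
  using corner_aux by blast

lemma BL:
  assumes "x1 < x2" "y1 \<le> y2" "s \<in> rect x1 x2 y1 y2" "y1 < y2 \<or> x2 = x1 + 1 \<or> s = (x2,y1)"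
  shows "\<exists>e \<in> {(x1,y2),(x1+1,y2)}. hp (rect x1 x2 y1 y2) s e"
proof -
  consider "y1 < y2" "s \<noteq> (x1,y2)" | "s = (x1,y2)" | "y1 = y2" "s \<noteq> (x1,y2)" using assms by linarith
  then show ?thesis
  proof cases
    case 1 then show ?thesis using corner assms by blast
  next
    case 2
    have h1: "hp (rect x1 x1 y1 y2) s (x1,y1)" using hp_rev hp_col assms 2 by simp
    have h2: "hp (rect (x1+1) x2 y1 y2) (x1+1,y1) (x1+1,y2)"
    proof (cases "x2 = x1 + 1")
      case True then show ?thesis using hp_col assms by simp
    next
      case False
      then have "y1 < y2" using assms 2 by auto
      then show ?thesis using False assms by (intro corner) auto
    qed
    have "hp (rect x1 x1 y1 y2 \<union> rect (x1+1) x2 y1 y2) s (x1+1,y2)"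
      by (rule hp_concat[OF h1 h2]) (auto simp: sg_adj_def)
    moreover have "rect x1 x1 y1 y2 \<union> rect (x1+1) x2 y1 y2 = rect x1 x2 y1 y2" using assms by (auto simp: rect_def)
    ultimately show ?thesis by auto
  next
    case 3
    then have "s = (x2,y1)" using assms by (cases s) auto
    then have "hp (rect x1 x2 y1 y2) s (x1,y2)" using hp_rev hp_row assms 3 by simp
    then show ?thesis by auto
  qed
qed

lemma TL:
  assumes "x1 < x2" "y1 \<le> y2" "s \<in> rect x1 x2 y1 y2" "y1 < y2 \<or> x2 = x1 + 1 \<or> s = (x2,y2)"
  shows "\<exists>e \<in> {(x1,y1),(x1+1,y1)}. hp (rect x1 x2 y1 y2) s e"
proof -
  obtain a b where s: "s = (a,b)" by (cases s)
  have "\<exists>e \<in> {(x1,y2),(x1+1,y2)}. hp (rect x1 x2 y1 y2) (a, y1+y2-b) e"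
    using assms s by (intro BL) auto
  then obtain e where e: "e \<in> {(x1,y2),(x1+1,y2)}" "hp (rect x1 x2 y1 y2) (a, y1+y2-b) e" by blast
  from rect_refly[OF e(2)] have "hp (rect x1 x2 y1 y2) s (fst e, y1+y2-snd e)" using s by simp
  moreover have "(fst e, y1+y2-snd e) \<in> {(x1,y1),(x1+1,y1)}" using e(1) by auto
  ultimately show ?thesis by blast
qed


lemma C_eq:
  assumes "m - k = 1" "c \<ge> 1" "l \<ge> 1" "n - l - c \<ge> 1" "m \<ge> 2"
  shows "C_shape m n k l c = rect 1 m 1 c \<union> rect 1 1 (c+1) (c+l) \<union> rect 1 m (c+l+1) n"
  using assms unfolding C_shape_def rect_def by auto

lemma core:
  assumes "m \<ge> 2" "c \<ge> 1" "l \<ge> 1" "n - l - c \<ge> 1" "m - k = 1"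
    and sB: "s \<in> rect 1 m 1 c" and tT: "t \<in> rect 1 m (c+l+1) n"
    and cs: "c \<ge> 2 \<or> m = 2 \<or> s = (m,1)" and ct: "n - l - c \<ge> 2 \<or> m = 2 \<or> t = (m,n)"
  shows "hp (C_shape m n k l c) s t"
proof -
  have "\<exists>e\<in>{(1,c),(1+1,c)}. hp (rect 1 m 1 c) s e"
    by (rule BL) (use assms in auto)
  then obtain e1 where e1: "e1 \<in> {(1,c),(1+1,c)}" "hp (rect 1 m 1 c) s e1" by blast
  have "\<exists>e\<in>{(1,c+l+1),(1+1,c+l+1)}. hp (rect 1 m (c+l+1) n) t e"
    by (rule TL) (use assms in auto)
  then obtain e2 where e2: "e2 \<in> {(1,c+l+1),(1+1,c+l+1)}" "hp (rect 1 m (c+l+1) n) t e2" by blast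
  have hm: "hp (rect 1 1 (c+1) (c+l)) (1,c+1) (1,c+l)" using hp_col assms by simp
  have h23: "hp (rect 1 1 (c+1) (c+l) \<union> rect 1 m (c+l+1) n) (1,c+1) t"
    by (rule hp_concat[OF hm hp_rev[OF e2(2)]]) (use e2(1) assms(3) in \<open>auto simp: sg_adj_def\<close>)
  have "hp (rect 1 m 1 c \<union> (rect 1 1 (c+1) (c+l) \<union> rect 1 m (c+l+1) n)) s t"
    by (rule hp_concat[OF e1(2) h23]) (use e1(1) assms(3) in \<open>auto simp: sg_adj_def\<close>)
  then show ?thesis using C_eq[of m k c l n] assms(1-5) by (simp add: Un_assoc)
qed

lemma ivt:
  "is_path_in V p \<Longrightarrow> snd (hd p) \<le> y0 \<Longrightarrow> y0 \<le> snd (last p) \<Longrightarrow> \<exists>q\<in>set p. snd q = y0"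
proof (induction p)
  case Nil then show ?case by (simp add: is_path_in_def)
next
  case (Cons a p)
  show ?case
  proof (cases "snd a \<ge> y0")
    case True then show ?thesis using Cons.prems by auto
  next
    case False
    then have pn: "p \<noteq> []" using Cons.prems by auto
    have adj: "sg_adj a (hd p)" using Cons.prems(1) pn
      unfolding is_path_in_def by (metis hd_conv_nth length_Cons length_greater_0_conv nth_Cons_0 nth_Cons_Suc zero_less_Suc Suc_less_eq)
    have "is_path_in V p" using Cons.prems(1) pn unfolding is_path_in_def
      by (metis Suc_less_eq length_Cons list.set_intros(2) nth_Cons_Suc subset_code(1))
    moreover have "snd (hd p) \<le> y0" using adj False unfolding sg_adj_def by auto
    moreover have "y0 \<le> snd (last p)" using Cons.prems(3) pn by auto
    ultimately show ?thesis using Cons.IH by auto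
  qed
qed

lemma mid_cut:
  assumes "m - k = 1" "c \<ge> 1" "l \<ge> 1" "n - l - c \<ge> 1" "m \<ge> 2"
    and "c + 1 \<le> y0" "y0 \<le> c + l"
  shows "is_cut_vertex (C_shape m n k l c) (1,y0)"
proof -
  let ?C = "C_shape m n k l c"
  have in1: "(1,y0) \<in> ?C" using assms unfolding C_shape_def by auto
  have u: "(1,1) \<in> ?C - {(1,y0)}" and v: "(1,n) \<in> ?C - {(1,y0)}" using assms unfolding C_shape_def by auto
  have "\<not> sg_connected (?C - {(1,y0)})"
  proof
    assume "sg_connected (?C - {(1,y0)})"
    then obtain p where p: "is_path_in (?C - {(1,y0)}) p" "hd p = (1,1)" "last p = (1,n)"
      using u v unfolding sg_connected_def by blast
    have "\<exists>q\<in>set p. snd q = y0" by (rule ivt[OF p(1)]) (use p(2,3) assms in auto)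
    then obtain q where q: "q \<in> set p" "snd q = y0" by blast
    then have "q \<in> ?C - {(1,y0)}" using p(1) unfolding is_path_in_def by auto
    then show False using q assms unfolding C_shape_def by (cases q) auto
  qed
  then show ?thesis using in1 unfolding is_cut_vertex_def by blast
qed

lemma deg_bot:
  assumes "m - k = 1" "c = 1" "l \<ge> 1" "n - l - c \<ge> 1" "m \<ge> 3"
  shows "sg_degree (C_shape m n k l c) (m,1) = 1"
proof -
  have "{u \<in> C_shape m n k l c. sg_adj (m,1) u} = {(m-1,1)}"
    using assms unfolding C_shape_def sg_adj_def by auto
  then show ?thesis unfolding sg_degree_def by simp
qed

lemma deg_top:
  assumes "m - k = 1" "c \<ge> 1" "l \<ge> 1" "n - l - c = 1" "m \<ge> 3"
  shows "sg_degree (C_shape m n k l c) (m,n) = 1"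
proof -
  have "{u \<in> C_shape m n k l c. sg_adj (m,n) u} = {(m-1,n)}"
    using assms unfolding C_shape_def sg_adj_def by auto
  then show ?thesis unfolding sg_degree_def by simp
qed


theorem lemma8:
  fixes m n k l c :: int and s t :: vtx
  assumes "m \<ge> 2" and "n \<ge> 3" and "k \<ge> 1" and "l \<ge> 1" and "c \<ge> 1"
    and "n - l - c \<ge> 1"
    and "m - k = 1"
    and "s \<in> C_shape m n k l c" and "t \<in> C_shape m n k l c" and "s \<noteq> t"
    and "fst s \<le> fst t"
    and notF1: "\<not> (is_cut_vertex (C_shape m n k l c) s \<or> is_cut_vertex (C_shape m n k l c) t
                   \<or> is_vertex_cut (C_shape m n k l c) {s, t})"
    and notF3: "\<not> (\<exists>w \<in> C_shape m n k l c. sg_degree (C_shape m n k l c) w = 1 \<and> w \<noteq> s \<and> w \<noteq> t)"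
    and notF9: "\<not> (m - k = 1 \<and> ((snd s \<le> c \<and> snd t \<le> c) \<or> (snd s > c + l \<and> snd t > c + l)))"
  shows "\<exists>p. is_ham_path (C_shape m n k l c) s t p"
proof -
  let ?C = "C_shape m n k l c"
  have Ceq: "?C = rect 1 m 1 c \<union> rect 1 1 (c+1) (c+l) \<union> rect 1 m (c+l+1) n"
    using C_eq assms(1,4-7) by blast
  have nomid: "\<not> (c + 1 \<le> snd v \<and> snd v \<le> c + l)" if "v \<in> ?C" "\<not> is_cut_vertex ?C v" for v
  proof
    assume h: "c + 1 \<le> snd v \<and> snd v \<le> c + l"
    then have "v = (1, snd v)" using that(1) Ceq by (cases v) auto
    then show False using mid_cut[of m k c l n "snd v"] h that(2) assms(1,4-7) by auto
  qed
  have sm: "\<not> (c + 1 \<le> snd s \<and> snd s \<le> c + l)" using nomid assms(8) notF1 by blast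
  have tm: "\<not> (c + 1 \<le> snd t \<and> snd t \<le> c + l)" using nomid assms(9) notF1 by blast
  have bot: "c \<ge> 2 \<or> m = 2 \<or> (m,1) = s \<or> (m,1) = t"
  proof (rule ccontr)
    assume h: "\<not> ?thesis"
    then have "c = 1" "m \<ge> 3" using assms by auto
    then have "sg_degree ?C (m,1) = 1" using deg_bot assms by blast
    moreover have "(m,1) \<in> ?C" using Ceq assms by auto
    ultimately show False using notF3 h by blast
  qed
  have top: "n - l - c \<ge> 2 \<or> m = 2 \<or> (m,n) = s \<or> (m,n) = t"
  proof (rule ccontr)
    assume h: "\<not> ?thesis"
    then have "n - l - c = 1" "m \<ge> 3" using assms by auto
    then have "sg_degree ?C (m,n) = 1" using deg_top assms by blast
    moreover have "(m,n) \<in> ?C" using Ceq assms by auto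
    ultimately show False using notF3 h by blast
  qed
  have "hp ?C s t"
  proof (cases "snd s \<le> c")
    case True
    then have sB: "s \<in> rect 1 m 1 c" using assms(4,8) Ceq by auto
    have "snd t > c + l" using True notF9 tm assms(7) by auto
    then have tT: "t \<in> rect 1 m (c+l+1) n" using assms(4,9) Ceq by auto
    have cs: "c \<ge> 2 \<or> m = 2 \<or> s = (m,1)" using bot tT assms by auto
    have ct: "n - l - c \<ge> 2 \<or> m = 2 \<or> t = (m,n)" using top sB assms by auto
    show ?thesis by (rule core[OF assms(1,5,4,6,7) sB tT cs ct])
  next
    case False
    then have sT: "s \<in> rect 1 m (c+l+1) n" using assms(4,8) Ceq sm by auto
    have "snd t \<le> c" using False sm notF9 tm assms(7) by auto
    then have tB: "t \<in> rect 1 m 1 c" using assms(4,9) Ceq by auto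
    have cs: "c \<ge> 2 \<or> m = 2 \<or> t = (m,1)" using bot sT assms by auto
    have ct: "n - l - c \<ge> 2 \<or> m = 2 \<or> s = (m,n)" using top tB assms by auto
    show ?thesis by (rule hp_rev[OF core[OF assms(1,5,4,6,7) tB sT cs ct]])
  qed
  then show ?thesis unfolding hp_def by blast
qed

end
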